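(* Consider the saturated Poisson log-linear model with corner-point constraints fitted to an $l^m$ contingency table. Suppose exactly one cell has a zero count, $y_{\mathbf{i}}=0$ for some $\mathbf{i}=(i_1,\dots,i_m)\in L$, and all other counts are positive. Let $e_0=\{j: i_j\neq 0\}$. Then the parameter corresponding to that cell, $\theta^{e_0}_{(i_j)_{j\in e_0}}$ (the intercept $\theta$ if $e_0=\emptyset$), is nonestimable. So is every parameter associated with a higher order interaction given it, i.e. every $\theta^{e}_{\mathbf{k}}$ with $e\supsetneq e_0$, $k_j=i_j$ for $j\in e_0$, and $k_j\in\{1,\dots,l-1\}$ for $j\in e\setminus e_0$.
   Context: Cells of an $l^m$ table are indexed by $\mathbf{i}=(i_1,\dots,i_m)\in L=\{0,1,\dots,l-1\}^m$, so there are $n=l^m$ cells. The counts $y_{\mathbf{i}}$ are observations of independent Poisson variables $Y_{\mathbf{i}}$ with means $\mu_{\mathbf{i}}>0$. Saturated log-linear model with corner-point constraints: for $e\subseteq\{1,\dots,m\}$, $\mathbf{i}_e=(i_j)_{j\in e}$ and $\operatorname{supp}(\mathbf{i})=\{j:i_j\neq 0\}$, $$\log\mu_{\mathbf{i}}=\sum_{e\subseteq \operatorname{supp}(\mathbf{i})}\theta^{e}_{\mathbf{i}_e}.$$ Any parameter involving level $0$ of some variable is set to zero, so the free parameters are $\theta^{e}_{\mathbf{k}}$ with $\mathbf{k}\in\{1,\dots,l-1\}^{e}$. The case $e=\emptyset$ is the intercept $\theta$. There are $p=l^m$ parameters, collected in $\boldsymbol\theta$. Equivalently $\log\boldsymbol\mu=A\boldsymbol\theta$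 for an $n\times p$ 0/1 design matrix $A$. The parameter corresponding to cell $\mathbf{i}$ is the parameter with the largest set of variables in its superscript among those appearing in $\log\mu_{\mathbf{i}}$, namely $\theta^{\operatorname{supp}(\mathbf{i})}_{\mathbf{i}_{\operatorname{supp}(\mathbf{i})}}$. Derivative matrix: the $p\times n$ matrix $D$ with entries $D_{s\mathbf{i}}=\partial (y_{\mathbf{i}}\log\mu_{\mathbf{i}})/\partial\theta_s$, i.e. $D_{s\mathbf{i}}=y_{\mathbf{i}}A_{\mathbf{i}s}$. The model is parameter redundant if $\operatorname{rank}D<p$. A parameter $\theta_s$ is estimable if the $s$-th entry of $\boldsymbol\alpha$ is $0$ for every vector $\boldsymbol\alpha$ with $\boldsymbol\alpha^{\mathsf T}D=\mathbf 0$; otherwise it is nonestimable. *)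

theory Defs
  imports Complex_Main
begin

text \<open>Cells of an l^m table: i :: nat => nat with i j < l for j < m, and i j = 0 for j >= m
  (canonical extension outside the m coordinates, indices 0..m-1 stand for variables 1..m).\<close>
definition cells :: "nat \<Rightarrow> nat \<Rightarrow> (nat \<Rightarrow> nat) set" where
  "cells l m = {i. (\<forall>j<m. i j < l) \<and> (\<forall>j. m \<le> j \<longrightarrow> i j = 0)}"

definition supp :: "(nat \<Rightarrow> nat) \<Rightarrow> nat set" where
  "supp i = {j. i j \<noteq> 0}"

text \<open>Free parameters theta^e_k: e a subset of the variables, k in {1..l-1}^e
  (k stored as a function, canonically 0 outside e). (\<emptyset>, \<lambda>_. 0) is the intercept.\<close>
definition params :: "nat \<Rightarrow> nat \<Rightarrow> (nat set \<times> (nat \<Rightarrow> nat)) set" where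
  "params l m = {(e, k). e \<subseteq> {..<m} \<and> (\<forall>j\<in>e. 1 \<le> k j \<and> k j < l)
                         \<and> (\<forall>j. j \<notin> e \<longrightarrow> k j = 0)}"

text \<open>Design matrix A: log mu_i = sum over e subseteq supp(i) of theta^e_(i_e).\<close>
definition design :: "(nat \<Rightarrow> nat) \<Rightarrow> (nat set \<times> (nat \<Rightarrow> nat)) \<Rightarrow> real" where
  "design i s = (if fst s \<subseteq> supp i \<and> (\<forall>j\<in>fst s. i j = snd s j) then 1 else 0)"

definition deriv_mat :: "((nat \<Rightarrow> nat) \<Rightarrow> nat) \<Rightarrow> (nat set \<times> (nat \<Rightarrow> nat)) \<Rightarrow> (nat \<Rightarrow> nat) \<Rightarrow> real" where
  "deriv_mat y s i = real (y i) * design i s"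

definition estimable :: "nat \<Rightarrow> nat \<Rightarrow> ((nat \<Rightarrow> nat) \<Rightarrow> nat) \<Rightarrow> (nat set \<times> (nat \<Rightarrow> nat)) \<Rightarrow> bool" where
  "estimable l m y s \<longleftrightarrow>
     (\<forall>\<alpha> :: (nat set \<times> (nat \<Rightarrow> nat)) \<Rightarrow> real.
        (\<forall>i\<in>cells l m. (\<Sum>t\<in>params l m. \<alpha> t * deriv_mat y t i) = 0) \<longrightarrow> \<alpha> s = 0)"

end

theory Submission
  imports Defs
begin

lemma alt_pow_zero:
  assumes "finite D" "D \<noteq> {}"
  shows "(\<Sum>T\<in>Pow D. (-1::real) ^ card T) = 0"
proof -
  have "(\<Prod>x\<in>D. (\<lambda>_. 1::real) x - (\<lambda>_. 1) x) = (\<Sum>X\<in>Pow D. (-1) ^ card X * (\<Prod>x\<in>X. (\<lambda>_. 1::real) x) * (\<Prod>x\<in>D-X. (\<lambda>_. 1) x))"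
    by (rule prod_diff_conv_sum[OF assms(1)])
  moreover have "(\<Prod>x\<in>D. (\<lambda>_. 1::real) x - (\<lambda>_. 1) x) = 0"
    using assms by (simp add: card_gt_0_iff)
  ultimately show ?thesis by simp
qed

definition alph :: "(nat \<Rightarrow> nat) \<Rightarrow> (nat set \<times> (nat \<Rightarrow> nat)) \<Rightarrow> real" where
  "alph i0 s = (if supp i0 \<subseteq> fst s \<and> (\<forall>j\<in>supp i0. snd s j = i0 j)
                then (-1) ^ card (fst s - supp i0) else 0)"

lemma supp_cells: "i \<in> cells l m \<Longrightarrow> supp i \<subseteq> {..<m}"
  unfolding cells_def supp_def by (metis (mono_tags, lifting) lessThan_iff mem_Collect_eq not_less subsetI)

lemma key:
  assumes i0: "i0 \<in> cells l m" and i: "i \<in> cells l m" and ne: "i \<noteq> i0"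
    and finP: "finite (params l m)"
  shows "(\<Sum>t\<in>params l m. alph i0 t * design i t) = 0"
proof (cases "supp i0 \<subseteq> supp i \<and> (\<forall>j\<in>supp i0. i j = i0 j)")
  case False
  show ?thesis
  proof (rule sum.neutral, rule ballI)
    fix t assume "t \<in> params l m"
    show "alph i0 t * design i t = 0"
      using False unfolding alph_def design_def by (auto split: if_splits) (metis subsetD)
  qed
next
  case True
  define P0 where "P0 = supp i0"
  define S where "S = {e. P0 \<subseteq> e \<and> e \<subseteq> supp i}"
  define g where "g = (\<lambda>e. (e, \<lambda>j. if j \<in> e then i j else 0))"
  have fin: "finite (supp i)" using supp_cells[OF i] finite_subset by blast
  have gS: "g ` S \<subseteq> params l m"
  proof
    fix t assume "t \<in> g ` S"
    then obtain e where e: "e \<in> S" "t = g e" by auto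
    have "e \<subseteq> {..<m}" using e supp_cells[OF i] unfolding S_def by auto
    moreover have "\<forall>j\<in>e. 1 \<le> i j \<and> i j < l"
      using e(1) i supp_cells[OF i] unfolding S_def cells_def supp_def by auto
    ultimately show "t \<in> params l m" using e unfolding params_def g_def by auto
  qed
  have eq: "\<forall>t\<in>params l m. alph i0 t * design i t
      = (if t \<in> g ` S then (-1) ^ card (fst t - P0) else 0)"
  proof
    fix t assume tp: "t \<in> params l m"
    obtain e k where t: "t = (e, k)" by force
    have k0: "\<forall>j. j \<notin> e \<longrightarrow> k j = 0" using tp t unfolding params_def by auto
    show "alph i0 t * design i t = (if t \<in> g ` S then (-1) ^ card (fst t - P0) else 0)"
    proof (cases "t \<in> g ` S")
      case True
      then obtain e' where e': "e' \<in> S" "t = g e'" by auto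
      then have "e' = e" "k = (\<lambda>j. if j \<in> e then i j else 0)" using t unfolding g_def by auto
      then have tt: "t = g e" using e' by simp
      have eS: "supp i0 \<subseteq> e" "e \<subseteq> supp i" using e' \<open>e' = e\<close> unfolding S_def P0_def by auto
      show ?thesis using True eS \<open>supp i0 \<subseteq> supp i \<and> (\<forall>j\<in>supp i0. i j = i0 j)\<close>
        unfolding tt alph_def design_def g_def P0_def by auto
    next
      case False
      have "\<not> (supp i0 \<subseteq> e \<and> (\<forall>j\<in>supp i0. k j = i0 j) \<and> e \<subseteq> supp i \<and> (\<forall>j\<in>e. i j = k j))"
      proof
        assume h: "supp i0 \<subseteq> e \<and> (\<forall>j\<in>supp i0. k j = i0 j) \<and> e \<subseteq> supp i \<and> (\<forall>j\<in>e. i j = k j)"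
        then have "k = (\<lambda>j. if j \<in> e then i j else 0)" using k0 by auto
        then have "t = g e" using t unfolding g_def by simp
        moreover have "e \<in> S" using h unfolding S_def P0_def by auto
        ultimately show False using False by auto
      qed
      then show ?thesis using False t unfolding alph_def design_def by auto
    qed
  qed
  have "(\<Sum>t\<in>params l m. alph i0 t * design i t)
      = (\<Sum>t\<in>params l m. if t \<in> g ` S then (-1) ^ card (fst t - P0) else 0)"
    using eq by (intro sum.cong refl) auto
  also have "\<dots> = (\<Sum>t\<in>params l m \<inter> g ` S. (-1) ^ card (fst t - P0))"
    by (simp add: sum.inter_restrict[OF finP, symmetric])
  also have "params l m \<inter> g ` S = g ` S" using gS by auto
  also have "(\<Sum>t\<in>g ` S. (-1::real) ^ card (fst t - P0)) = (\<Sum>e\<in>S. (-1) ^ card (e - P0))"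
    by (subst sum.reindex) (auto simp: inj_on_def g_def)
  also have "\<dots> = (\<Sum>T\<in>Pow (supp i - P0). (-1) ^ card T)"
    by (rule sum.reindex_bij_witness[of _ "\<lambda>T. T \<union> P0" "\<lambda>e. e - P0"])
       (use True in \<open>auto simp: S_def P0_def\<close>)
  also have "\<dots> = 0"
  proof (rule alt_pow_zero)
    show "finite (supp i - P0)" using fin by simp
    show "supp i - P0 \<noteq> {}"
    proof
      assume "supp i - P0 = {}"
      then have "supp i = supp i0" using True unfolding P0_def by auto
      then have "i = i0" using True unfolding supp_def by (auto simp: fun_eq_iff) (metis mem_Collect_eq neq0_conv)
      then show False using ne by simp
    qed
  qed
  finally show ?thesis .
qed

lemma not_est:
  assumes i0: "i0 \<in> cells l m"
    and zero: "y i0 = 0"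
    and ne: "alph i0 s \<noteq> 0"
  shows "\<not> estimable l m y s"
  unfolding estimable_def
proof
  assume h: "\<forall>\<alpha>. (\<forall>i\<in>cells l m. (\<Sum>t\<in>params l m. \<alpha> t * deriv_mat y t i) = 0) \<longrightarrow> \<alpha> s = 0"
  have "\<forall>i\<in>cells l m. (\<Sum>t\<in>params l m. alph i0 t * deriv_mat y t i) = 0"
  proof
    fix i assume i: "i \<in> cells l m"
    show "(\<Sum>t\<in>params l m. alph i0 t * deriv_mat y t i) = 0"
    proof (cases "i = i0")
      case True then show ?thesis by (simp add: deriv_mat_def zero)
    next
      case False
      have "(\<Sum>t\<in>params l m. alph i0 t * deriv_mat y t i)
          = real (y i) * (\<Sum>t\<in>params l m. alph i0 t * design i t)"
        by (simp add: deriv_mat_def sum_distrib_left mult_ac)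
      show ?thesis
      proof (cases "finite (params l m)")
        case True
        then show ?thesis using key[OF i0 i False] \<open>(\<Sum>t\<in>params l m. alph i0 t * deriv_mat y t i)
          = real (y i) * (\<Sum>t\<in>params l m. alph i0 t * design i t)\<close> by simp
      qed simp
    qed
  qed
  then have "alph i0 s = 0" using h by blast
  then show False using ne by simp
qed

theorem theorem1:
  fixes l m :: nat and y :: "(nat \<Rightarrow> nat) \<Rightarrow> nat" and i0 :: "nat \<Rightarrow> nat"
  assumes i0: "i0 \<in> cells l m"
    and zero: "y i0 = 0"
    and pos: "\<forall>i\<in>cells l m. i \<noteq> i0 \<longrightarrow> y i > 0"
  shows "\<not> estimable l m y (supp i0, i0)
         \<and> (\<forall>e k. (e, k) \<in> params l m \<and> supp i0 \<subset> e \<and> (\<forall>j\<in>supp i0. k j = i0 j)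
                  \<longrightarrow> \<not> estimable l m y (e, k))"
proof
  show "\<not> estimable l m y (supp i0, i0)"
    by (rule not_est[where y=y, OF i0 zero]) (simp add: alph_def)
  show "\<forall>e k. (e, k) \<in> params l m \<and> supp i0 \<subset> e \<and> (\<forall>j\<in>supp i0. k j = i0 j)
                  \<longrightarrow> \<not> estimable l m y (e, k)"
    by (auto intro!: not_est[where y=y, OF i0 zero] simp: alph_def)
qed

end
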